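(* Let $\epsilon>0$ and let $\gamma$ be an arclength-parameterized curve in $\mathbb{R}^3$ whose curvature is bounded by $1$, contained in the intersection of two orthogonal slabs of width $\epsilon$, each of which contains the $y$-axis. Then $|\langle T, v\rangle| < 3\sqrt{\epsilon}$ at every point of $\gamma$, where $T$ is the unit tangent vector of $\gamma$ and $v$ is any unit vector perpendicular to $e_2$.
   Context: $e_2$ denotes the unit vector in the direction of the $y$-axis in $\mathbb{R}^3$ with coordinates $(x,y,z)$. A slab of width $\epsilon$ is the closed region between two parallel affine planes at distance $\epsilon$ apart. *)

theory Defs
  imports "HOL-Analysis.Analysis"
begin

text \<open>Unit vector in the direction of the y-axis of R^3 (coordinates x,y,z = components 1,2,3).\<close>
definition e2 :: "real ^ 3" where
  "e2 = axis 2 1"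

definition y_axis :: "(real ^ 3) set" where
  "y_axis = {s *\<^sub>R e2 | s. True}"

definition slab :: "real ^ 3 \<Rightarrow> real \<Rightarrow> real \<Rightarrow> (real ^ 3) set" where
  "slab n c w = {p. c \<le> n \<bullet> p \<and> n \<bullet> p \<le> c + w}"

definition tangent :: "(real \<Rightarrow> real ^ 3) \<Rightarrow> real \<Rightarrow> real ^ 3" where
  "tangent \<gamma> t = vector_derivative \<gamma> (at t)"

definition arclength_curve :: "(real \<Rightarrow> real ^ 3) \<Rightarrow> bool" where
  "arclength_curve \<gamma> \<longleftrightarrow>
     (\<forall>t. \<gamma> differentiable (at t) \<and> norm (tangent \<gamma> t) = 1
          \<and> tangent \<gamma> differentiable (at t))"

definition curvature :: "(real \<Rightarrow> real ^ 3) \<Rightarrow> real \<Rightarrow> real" where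
  "curvature \<gamma> t = norm (vector_derivative (tangent \<gamma>) (at t))"

end

theory Submission
  imports Defs
begin

lemma e2_norm: "norm e2 = 1" by (simp add: e2_def)

lemma basis_zero:
  fixes a b c x :: "real ^ 3"
  assumes "norm a = 1" "norm b = 1" "norm c = 1" "a \<bullet> b = 0" "a \<bullet> c = 0" "b \<bullet> c = 0"
    and "x \<bullet> a = 0" "x \<bullet> b = 0" "x \<bullet> c = 0"
  shows "x = 0"
proof -
  have ne: "a \<noteq> b" "a \<noteq> c" "b \<noteq> c" using assms by (auto simp: norm_eq_sqrt_inner)
  have nz: "0 \<notin> {a,b,c}" using assms by auto
  have po: "pairwise orthogonal {a,b,c}" using assms
    by (auto simp: pairwise_def orthogonal_def inner_commute)
  have ind: "independent {a,b,c}" by (rule pairwise_orthogonal_independent[OF po nz])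
  have card: "card {a,b,c} = 3" using ne by auto
  have "UNIV \<subseteq> span {a,b,c}"
    by (rule card_ge_dim_independent[OF _ ind]) (auto simp: card)
  hence "orthogonal x x" using assms
    by (intro orthogonal_to_span[of x "{a,b,c}"]) (auto simp: orthogonal_def)
  thus ?thesis by (simp add: orthogonal_def)
qed

lemma deriv_bound_pos:
  fixes f g h :: "real \<Rightarrow> real"
  assumes fb: "\<And>t. c \<le> f t \<and> f t \<le> c + e"
    and fd: "\<And>t. (f has_real_derivative g t) (at t)"
    and gd: "\<And>t. (g has_real_derivative h t) (at t)"
    and hb: "\<And>t. \<bar>h t\<bar> \<le> 1"
    and pos: "g t0 > 0"
  shows "(g t0)^2 \<le> 2 * e"
proof -
  define a where "a = g t0"
  define diff where "diff = (\<lambda>m::nat. if m = 0 then f else if m = 1 then g else h)"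
  have "\<exists>t::real. t0 < t \<and> t < t0 + a \<and>
    f (t0 + a) = (\<Sum>m<2. (diff m t0 / fact m) * (t0 + a - t0)^m) + (diff 2 t / fact 2) * (t0 + a - t0)^2"
    by (rule Taylor_up[where a=t0]) (use fd gd pos in \<open>auto simp: diff_def a_def less_2_cases_iff\<close>)
  then obtain s where "f (t0 + a) = f t0 + g t0 * a + h s / 2 * a^2"
    by (auto simp: diff_def numeral_2_eq_2)
  moreover have "h s \<ge> -1" using hb[of s] by auto
  moreover have "h s / 2 * a^2 \<ge> -1/2 * a^2"
    using \<open>h s \<ge> -1\<close> by (intro mult_right_mono) auto
  ultimately have "f (t0 + a) - f t0 \<ge> a^2 - a^2/2"
    unfolding a_def by (simp add: power2_eq_square)
  with fb[of "t0+a"] fb[of t0] show ?thesis unfolding a_def by auto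
qed

lemma deriv_bound:
  fixes f g h :: "real \<Rightarrow> real"
  assumes fb: "\<And>t. c \<le> f t \<and> f t \<le> c + e"
    and fd: "\<And>t. (f has_real_derivative g t) (at t)"
    and gd: "\<And>t. (g has_real_derivative h t) (at t)"
    and hb: "\<And>t. \<bar>h t\<bar> \<le> 1"
  shows "(g t0)^2 \<le> 2 * e"
proof -
  have e: "e \<ge> 0" using fb[of 0] by auto
  consider "g t0 > 0" | "g t0 = 0" | "g t0 < 0" by linarith
  then show ?thesis
  proof cases
    case 1 thus ?thesis using deriv_bound_pos[OF fb fd gd hb] by blast
  next
    case 2 thus ?thesis using e by simp
  next
    case 3
    have "((\<lambda>t. - g t) t0)^2 \<le> 2 * e"
      apply (rule deriv_bound_pos[where f="\<lambda>t. - f t" and g="\<lambda>t. - g t" and c="-c-e" and h="\<lambda>t. - h t"])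
       subgoal for t using fb[of t] by linarith
      using fd gd hb 3 by (auto intro: derivative_eq_intros)
    thus ?thesis by simp
  qed
qed


lemma comp_bound:
  fixes \<gamma> :: "real \<Rightarrow> real ^ 3" and n :: "real ^ 3"
  assumes ac: "arclength_curve \<gamma>"
    and cb: "\<forall>t. curvature \<gamma> t \<le> 1"
    and nn: "norm n = 1"
    and rs: "range \<gamma> \<subseteq> slab n c e"
  shows "(tangent \<gamma> t \<bullet> n)^2 \<le> 2 * e"
proof -
  have bl: "bounded_linear (\<lambda>y::real^3. n \<bullet> y)" by (rule bounded_linear_inner_right)
  have "(n \<bullet> tangent \<gamma> t)^2 \<le> 2 * e"
  proof (rule deriv_bound[where f="\<lambda>s. n \<bullet> \<gamma> s" and g="\<lambda>s. n \<bullet> tangent \<gamma> s" and c=c and h="\<lambda>s. n \<bullet> vector_derivative (tangent \<gamma>) (at s)"])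
    fix s
    show "c \<le> n \<bullet> \<gamma> s \<and> n \<bullet> \<gamma> s \<le> c + e" using rs by (auto simp: slab_def)
    have "(\<gamma> has_vector_derivative tangent \<gamma> s) (at s)"
      using ac unfolding arclength_curve_def tangent_def by (simp add: vector_derivative_works[symmetric])
    from bounded_linear.has_vector_derivative[OF bl this]
    show "((\<lambda>s. n \<bullet> \<gamma> s) has_real_derivative n \<bullet> tangent \<gamma> s) (at s)"
      by (simp add: has_real_derivative_iff_has_vector_derivative)
    have "(tangent \<gamma> has_vector_derivative vector_derivative (tangent \<gamma>) (at s)) (at s)"
      using ac unfolding arclength_curve_def by (simp add: vector_derivative_works[symmetric])
    from bounded_linear.has_vector_derivative[OF bl this]
    show "((\<lambda>s. n \<bullet> tangent \<gamma> s) has_real_derivative n \<bullet> vector_derivative (tangent \<gamma>) (at s)) (at s)"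
      by (simp add: has_real_derivative_iff_has_vector_derivative)
    have "\<bar>n \<bullet> vector_derivative (tangent \<gamma>) (at s)\<bar> \<le> norm n * norm (vector_derivative (tangent \<gamma>) (at s))"
      by (rule Cauchy_Schwarz_ineq2)
    also have "\<dots> \<le> 1" using nn cb unfolding curvature_def by auto
    finally show "\<bar>n \<bullet> vector_derivative (tangent \<gamma>) (at s)\<bar> \<le> 1" .
  qed
  thus ?thesis by (simp add: inner_commute)
qed

lemma normal_e2:
  assumes "y_axis \<subseteq> slab n c e"
  shows "n \<bullet> e2 = 0"
proof (rule ccontr)
  assume k: "n \<bullet> e2 \<noteq> 0"
  have "0 *\<^sub>R e2 \<in> y_axis" unfolding y_axis_def by blast
  hence "0 *\<^sub>R e2 \<in> slab n c e" using assms by blast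
  hence c0: "c \<le> 0" "0 \<le> c + e" by (auto simp: slab_def)
  have "((c + e + 1) / (n \<bullet> e2)) *\<^sub>R e2 \<in> y_axis" unfolding y_axis_def by blast
  hence "((c + e + 1) / (n \<bullet> e2)) *\<^sub>R e2 \<in> slab n c e" using assms by blast
  hence "n \<bullet> (((c + e + 1) / (n \<bullet> e2)) *\<^sub>R e2) \<le> c + e" by (auto simp: slab_def)
  thus False using k by simp
qed

lemma final_arith:
  fixes a1 a2 b1 b2 e :: real
  assumes "a1^2 \<le> 2*e" "a2^2 \<le> 2*e" "b1^2 + b2^2 = 1" "e > 0"
  shows "\<bar>a1*b1 + a2*b2\<bar> < 3 * sqrt e"
proof -
  have id: "(a1*b1 + a2*b2)^2 + (a1*b2 - a2*b1)^2 = (a1^2+a2^2)*(b1^2+b2^2)"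
    by (simp add: power2_eq_square algebra_simps)
  have "(a1*b1 + a2*b2)^2 \<le> (a1*b1 + a2*b2)^2 + (a1*b2 - a2*b1)^2" by simp
  also have "\<dots> = a1^2 + a2^2" using id assms(3) by simp
  also have "\<dots> \<le> 4*e" using assms(1,2) by simp
  finally have "(a1*b1 + a2*b2)^2 \<le> 4*e" .
  also have "\<dots> < 9 * e" using assms by simp
  finally have "sqrt ((a1*b1 + a2*b2)^2) < sqrt (9*e)" by (rule real_sqrt_less_mono)
  also have "sqrt (9*e) = 3 * sqrt e" by (simp add: real_sqrt_mult)
  finally show ?thesis by (simp only: real_sqrt_abs)
qed

theorem lemma2p5:
  fixes \<gamma> :: "real \<Rightarrow> real ^ 3" and \<epsilon> :: real
    and n1 n2 :: "real ^ 3" and c1 c2 :: real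
  assumes "\<epsilon> > 0"
    and "arclength_curve \<gamma>"
    and "\<forall>t. curvature \<gamma> t \<le> 1"
    and "norm n1 = 1" and "norm n2 = 1" and "n1 \<bullet> n2 = 0"
    and "y_axis \<subseteq> slab n1 c1 \<epsilon>" and "y_axis \<subseteq> slab n2 c2 \<epsilon>"
    and "range \<gamma> \<subseteq> slab n1 c1 \<epsilon> \<inter> slab n2 c2 \<epsilon>"
  shows "\<forall>t. \<forall>v :: real ^ 3. norm v = 1 \<and> v \<bullet> e2 = 0 \<longrightarrow>
           \<bar>tangent \<gamma> t \<bullet> v\<bar> < 3 * sqrt \<epsilon>"
proof (intro allI impI)
  fix t and v :: "real ^ 3"
  assume v: "norm v = 1 \<and> v \<bullet> e2 = 0"
  have a1: "(tangent \<gamma> t \<bullet> n1)^2 \<le> 2 * \<epsilon>"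
    by (rule comp_bound[where c=c1]) (use assms in auto)
  have a2: "(tangent \<gamma> t \<bullet> n2)^2 \<le> 2 * \<epsilon>"
    by (rule comp_bound[where c=c2]) (use assms in auto)
  have o1: "n1 \<bullet> e2 = 0" by (rule normal_e2) (use assms in auto)
  have o2: "n2 \<bullet> e2 = 0" by (rule normal_e2) (use assms in auto)
  have u1: "n1 \<bullet> n1 = 1" "n2 \<bullet> n2 = 1" "e2 \<bullet> e2 = 1"
    using assms e2_norm by (simp_all add: norm_eq_1)
  define y where "y = v - (v \<bullet> n1) *\<^sub>R n1 - (v \<bullet> n2) *\<^sub>R n2"
  have "y = 0"
    apply (rule basis_zero[of n1 n2 e2])
    using assms(4,5,6) e2_norm o1 o2 u1 v inner_commute[of n2 n1] inner_commute[of e2 n1] inner_commute[of e2 n2]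
    by (simp_all add: y_def inner_diff_left)
  hence vv: "v = (v \<bullet> n1) *\<^sub>R n1 + (v \<bullet> n2) *\<^sub>R n2" unfolding y_def by (simp add: algebra_simps)
  have "1 = v \<bullet> v" using v by (simp add: norm_eq_1)
  also have "\<dots> = (v \<bullet> n1)^2 + (v \<bullet> n2)^2"
    apply (subst (1 2) vv) using u1 assms(6) inner_commute[of n2 n1]
    by (simp add: inner_add_left inner_add_right power2_eq_square)
  finally have b: "(v \<bullet> n1)^2 + (v \<bullet> n2)^2 = 1" by simp
  have "tangent \<gamma> t \<bullet> v = (tangent \<gamma> t \<bullet> n1) * (v \<bullet> n1) + (tangent \<gamma> t \<bullet> n2) * (v \<bullet> n2)"
    by (subst vv) (simp add: inner_add_right)
  thus "\<bar>tangent \<gamma> t \<bullet> v\<bar> < 3 * sqrt \<epsilon>"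
    using final_arith[OF a1 a2 b assms(1)] by simp
qed

end
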